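(* Let $a\in\mathbb{B}^2$ and $T_a:\mathbb{B}^2\to\mathbb{B}^2$, $T_a(z)=\frac{z-a}{1-\overline{a}z}$. Then for each $d\in\{t,j^*,w,s,p,b_{\cdot,2}\}$, $$\sup_{x,y\in\mathbb{B}^2,\ x\ne y}\frac{d_{\mathbb{B}^2}(T_a(x),T_a(y))}{d_{\mathbb{B}^2}(x,y)}\ge1+|a|.$$
   Context: $\mathbb{B}^2$ is the unit disk in $\mathbb{C}$; $S^{1}(x,r)$ is the circle of center $x$ and radius $r$. For a domain $G\subsetneq\mathbb{R}^n$ and $x\in G$, $d_G(x)=\inf\{|x-z|:z\in\partial G\}$. Intrinsic (quasi-)metrics: $t_G(x,y)=\frac{|x-y|}{|x-y|+d_G(x)+d_G(y)}$; $j^*_G(x,y)=\frac{|x-y|}{|x-y|+2\min\{d_G(x),d_G(y)\}}$; $s_G(x,y)=\frac{|x-y|}{\inf_{z\in\partial G}(|x-z|+|z-y|)}$; $p_G(x,y)=\frac{|x-y|}{\sqrt{|x-y|^2+4d_G(x)d_G(y)}}$; $b_{G,2}(x,y)=\sup_{z\in\partial G}\frac{|x-y|}{(|x-z|^2+|z-y|^2)^{1/2}}$; for convex $G$, $w_G(x,y)=\frac{|x-y|}{\min\{\inf_{\tilde y\in\tilde Y}|x-\tilde y|,\ \inf_{\tilde x\in\tilde X}|y-\tilde x|\}}$ with $\tilde X=\{\tilde x\in S^{n-1}(x,2d_G(x)):(x+\tilde x)/2\in\partial G\}$, $\tilde Y=\{\tilde y\in S^{n-1}(y,2d_G(y)):(y+\tilde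 y)/2\in\partial G\}$. *)

theory Defs
  imports "HOL-Analysis.Analysis" "HOL-Library.Extended_Real"
begin

definition bdist :: "'a::real_normed_vector set \<Rightarrow> 'a \<Rightarrow> real" where
  "bdist G x = Inf ((\<lambda>z. dist x z) ` frontier G)"

definition t_metric :: "'a::real_normed_vector set \<Rightarrow> 'a \<Rightarrow> 'a \<Rightarrow> real" where
  "t_metric G x y = dist x y / (dist x y + bdist G x + bdist G y)"

definition jstar_metric :: "'a::real_normed_vector set \<Rightarrow> 'a \<Rightarrow> 'a \<Rightarrow> real" where
  "jstar_metric G x y = dist x y / (dist x y + 2 * min (bdist G x) (bdist G y))"

definition s_metric :: "'a::real_normed_vector set \<Rightarrow> 'a \<Rightarrow> 'a \<Rightarrow> real" where
  "s_metric G x y = dist x y / Inf ((\<lambda>z. dist x z + dist z y) ` frontier G)"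

definition p_metric :: "'a::real_normed_vector set \<Rightarrow> 'a \<Rightarrow> 'a \<Rightarrow> real" where
  "p_metric G x y = dist x y / sqrt ((dist x y)\<^sup>2 + 4 * bdist G x * bdist G y)"

definition b2_metric :: "'a::real_normed_vector set \<Rightarrow> 'a \<Rightarrow> 'a \<Rightarrow> real" where
  "b2_metric G x y = Sup ((\<lambda>z. dist x y / sqrt ((dist x z)\<^sup>2 + (dist z y)\<^sup>2)) ` frontier G)"

definition w_tilde :: "'a::real_normed_vector set \<Rightarrow> 'a \<Rightarrow> 'a set" where
  "w_tilde G x = {x'. x' \<in> sphere x (2 * bdist G x) \<and> (1/2) *\<^sub>R (x + x') \<in> frontier G}"

definition w_metric :: "'a::real_normed_vector set \<Rightarrow> 'a \<Rightarrow> 'a \<Rightarrow> real" where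
  "w_metric G x y = dist x y /
     min (Inf ((\<lambda>y'. dist x y') ` w_tilde G y)) (Inf ((\<lambda>x'. dist y x') ` w_tilde G x))"

definition moebT :: "complex \<Rightarrow> complex \<Rightarrow> complex" where
  "moebT a z = (z - a) / (1 - cnj a * z)"

end

theory Submission
  imports Defs
begin

lemma ray_norm: "norm (v::complex) = 1 \<Longrightarrow> norm (complex_of_real \<alpha> * v) = \<bar>\<alpha>\<bar>"
  by (simp add: norm_mult)

lemma ray_dist: "norm (v::complex) = 1 \<Longrightarrow>
   dist (complex_of_real \<alpha> * v) (complex_of_real \<beta> * v) = \<bar>\<alpha> - \<beta>\<bar>"
proof -
  assume "norm v = 1"
  have "complex_of_real \<alpha> * v - complex_of_real \<beta> * v = complex_of_real (\<alpha> - \<beta>) * v"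
    by (simp add: algebra_simps)
  then have "dist (complex_of_real \<alpha> * v) (complex_of_real \<beta> * v) = norm (complex_of_real (\<alpha> - \<beta>) * v)"
    by (simp only: dist_norm)
  then show ?thesis using \<open>norm v = 1\<close> by (simp only: norm_mult norm_of_real) simp
qed

lemma sph_lb: "norm (w::complex) = 1 \<Longrightarrow> 1 - norm p \<le> dist p w"
  using norm_triangle_ineq2[of w p] by (simp add: dist_norm norm_minus_commute)

lemma frontier_D: "frontier (ball (0::complex) 1) = sphere 0 1"
  by simp

lemma bdist_ray:
  assumes "0 \<le> \<alpha>" "\<alpha> < 1" "norm (v::complex) = 1"
  shows "bdist (ball 0 1) (complex_of_real \<alpha> * v) = 1 - \<alpha>"
  unfolding bdist_def frontier_D
proof (rule cInf_eq_minimum)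
  have "dist (complex_of_real \<alpha> * v) v = 1 - \<alpha>"
    using ray_dist[OF assms(3), of \<alpha> 1] assms by simp
  then show "1 - \<alpha> \<in> dist (complex_of_real \<alpha> * v) ` sphere 0 1"
    using assms(3) by (metis dist_0_norm image_eqI mem_sphere)
next
  fix x assume "x \<in> dist (complex_of_real \<alpha> * v) ` sphere 0 1"
  then obtain w where "norm w = 1" "x = dist (complex_of_real \<alpha> * v) w" by auto
  then show "1 - \<alpha> \<le> x" using sph_lb[of w "complex_of_real \<alpha> * v"] ray_norm[OF assms(3)] assms
    by simp
qed

lemma sinf_ray:
  assumes "0 \<le> \<alpha>" "\<alpha> < 1" "0 \<le> \<beta>" "\<beta> < 1" "norm (v::complex) = 1"
  shows "Inf ((\<lambda>z. dist (complex_of_real \<alpha> * v) z + dist z (complex_of_real \<beta> * v)) ` frontier (ball 0 1))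
     = 2 - \<alpha> - \<beta>"
  unfolding frontier_D
proof (rule cInf_eq_minimum)
  have "dist (complex_of_real \<alpha> * v) v = 1 - \<alpha>"
    using ray_dist[OF assms(5), of \<alpha> 1] assms by simp
  moreover have "dist v (complex_of_real \<beta> * v) = 1 - \<beta>"
    using ray_dist[OF assms(5), of 1 \<beta>] assms by simp
  ultimately show "2 - \<alpha> - \<beta> \<in> (\<lambda>z. dist (complex_of_real \<alpha> * v) z + dist z (complex_of_real \<beta> * v)) ` sphere 0 1"
    using assms(5) by (intro image_eqI[of _ _ v]) auto
next
  fix x assume "x \<in> (\<lambda>z. dist (complex_of_real \<alpha> * v) z + dist z (complex_of_real \<beta> * v)) ` sphere 0 1"
  then obtain w where "norm w = 1" "x = dist (complex_of_real \<alpha> * v) w + dist w (complex_of_real \<beta> * v)" by auto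
  then show "2 - \<alpha> - \<beta> \<le> x"
    using sph_lb[of w "complex_of_real \<alpha> * v"] sph_lb[of w "complex_of_real \<beta> * v"]
      ray_norm[OF assms(5)] assms by (simp add: dist_commute)
qed

lemma wt_lb:
  assumes "y' \<in> w_tilde (ball (0::complex) 1) q"
  shows "2 - norm q - norm p \<le> dist p y'"
proof -
  have "norm ((1/2) *\<^sub>R (q + y')) = 1" using assms unfolding w_tilde_def frontier_D by auto
  then have "norm (q + y') = 2" by simp
  moreover have "norm (q + y') \<le> norm q + norm y'" by (rule norm_triangle_ineq)
  moreover have "norm y' - norm p \<le> dist p y'"
    using norm_triangle_ineq2[of y' p] by (simp add: dist_norm norm_minus_commute)
  ultimately show ?thesis by linarith
qed

lemma winf_ray:
  assumes "0 \<le> \<alpha>" "\<alpha> < 1" "0 \<le> \<beta>" "\<beta> < 1" "norm (v::complex) = 1"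
  shows "Inf ((\<lambda>y'. dist (complex_of_real \<alpha> * v) y') ` w_tilde (ball 0 1) (complex_of_real \<beta> * v))
     = 2 - \<alpha> - \<beta>"
proof (rule cInf_eq_minimum)
  define y0 where "y0 = complex_of_real (2 - \<beta>) * v"
  have "dist (complex_of_real \<beta> * v) y0 = 2 * (1 - \<beta>)"
    using ray_dist[OF assms(5), of \<beta> "2-\<beta>"] assms by (simp add: y0_def)
  moreover have s2: "complex_of_real \<beta> * v + y0 = 2 * v" by (simp add: y0_def algebra_simps)
  then have "norm (complex_of_real \<beta> * v + y0) = 2" using assms(5) by (simp add: norm_mult)
  moreover have "(1/2) *\<^sub>R (complex_of_real \<beta> * v + y0) = v" using s2 by (simp add: scaleR_conv_of_real)
  ultimately have "y0 \<in> w_tilde (ball 0 1) (complex_of_real \<beta> * v)"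
    unfolding w_tilde_def frontier_D using bdist_ray[OF assms(3,4,5)] assms(5) by simp
  moreover have "dist (complex_of_real \<alpha> * v) y0 = 2 - \<alpha> - \<beta>"
    using ray_dist[OF assms(5), of \<alpha> "2-\<beta>"] assms by (simp add: y0_def)
  ultimately show "2 - \<alpha> - \<beta> \<in> (\<lambda>y'. dist (complex_of_real \<alpha> * v) y') ` w_tilde (ball 0 1) (complex_of_real \<beta> * v)"
    by (metis image_eqI)
next
  fix x assume "x \<in> (\<lambda>y'. dist (complex_of_real \<alpha> * v) y') ` w_tilde (ball 0 1) (complex_of_real \<beta> * v)"
  then obtain y' where "y' \<in> w_tilde (ball 0 1) (complex_of_real \<beta> * v)" "x = dist (complex_of_real \<alpha> * v) y'" by auto
  then show "2 - \<alpha> - \<beta> \<le> x" using wt_lb[of y' "complex_of_real \<beta> * v" "complex_of_real \<alpha> * v"]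
      ray_norm[OF assms(5)] assms by simp
qed

lemma b2sup_ray:
  assumes "0 \<le> \<alpha>" "\<alpha> < 1" "0 \<le> \<beta>" "\<beta> < 1" "norm (v::complex) = 1"
  shows "b2_metric (ball 0 1) (complex_of_real \<alpha> * v) (complex_of_real \<beta> * v)
     = \<bar>\<alpha> - \<beta>\<bar> / sqrt ((1-\<alpha>)\<^sup>2 + (1-\<beta>)\<^sup>2)"
  unfolding b2_metric_def frontier_D ray_dist[OF assms(5)]
proof (rule cSup_eq_maximum)
  have "dist (complex_of_real \<alpha> * v) v = 1 - \<alpha>"
    using ray_dist[OF assms(5), of \<alpha> 1] assms by simp
  moreover have "dist v (complex_of_real \<beta> * v) = 1 - \<beta>"
    using ray_dist[OF assms(5), of 1 \<beta>] assms by simp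
  ultimately show "\<bar>\<alpha> - \<beta>\<bar> / sqrt ((1-\<alpha>)\<^sup>2 + (1-\<beta>)\<^sup>2) \<in> (\<lambda>z. \<bar>\<alpha> - \<beta>\<bar> / sqrt ((dist (complex_of_real \<alpha> * v) z)\<^sup>2 + (dist z (complex_of_real \<beta> * v))\<^sup>2)) ` sphere 0 1"
    using assms(5) by (intro image_eqI[of _ _ v]) auto
next
  fix x assume "x \<in> (\<lambda>z. \<bar>\<alpha> - \<beta>\<bar> / sqrt ((dist (complex_of_real \<alpha> * v) z)\<^sup>2 + (dist z (complex_of_real \<beta> * v))\<^sup>2)) ` sphere 0 1"
  then obtain w where w: "norm w = 1" "x = \<bar>\<alpha> - \<beta>\<bar> / sqrt ((dist (complex_of_real \<alpha> * v) w)\<^sup>2 + (dist w (complex_of_real \<beta> * v))\<^sup>2)" by auto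
  have h1: "1 - \<alpha> \<le> dist (complex_of_real \<alpha> * v) w"
    using sph_lb[of w "complex_of_real \<alpha> * v"] ray_norm[OF assms(5)] assms w by simp
  have h2: "1 - \<beta> \<le> dist w (complex_of_real \<beta> * v)"
    using sph_lb[of w "complex_of_real \<beta> * v"] ray_norm[OF assms(5)] assms w by (simp add: dist_commute)
  have "(1-\<alpha>)\<^sup>2 + (1-\<beta>)\<^sup>2 \<le> (dist (complex_of_real \<alpha> * v) w)\<^sup>2 + (dist w (complex_of_real \<beta> * v))\<^sup>2"
  proof -
    have "(1-\<alpha>)\<^sup>2 \<le> (dist (complex_of_real \<alpha> * v) w)\<^sup>2" by (rule power_mono[OF h1]) (use assms in simp)
    moreover have "(1-\<beta>)\<^sup>2 \<le> (dist w (complex_of_real \<beta> * v))\<^sup>2" by (rule power_mono[OF h2]) (use assms in simp)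
    ultimately show ?thesis by simp
  qed
  then have "sqrt ((1-\<alpha>)\<^sup>2 + (1-\<beta>)\<^sup>2) \<le> sqrt ((dist (complex_of_real \<alpha> * v) w)\<^sup>2 + (dist w (complex_of_real \<beta> * v))\<^sup>2)"
    by simp
  moreover have "0 < sqrt ((1-\<alpha>)\<^sup>2 + (1-\<beta>)\<^sup>2)" using assms by (simp add: add_pos_nonneg)
  ultimately show "x \<le> \<bar>\<alpha> - \<beta>\<bar> / sqrt ((1-\<alpha>)\<^sup>2 + (1-\<beta>)\<^sup>2)"
    unfolding w(2) by (intro divide_left_mono) auto
qed


lemma forms:
  assumes "0 \<le> \<alpha>" "\<alpha> < 1" "0 \<le> \<beta>" "\<beta> < 1" "norm (v::complex) = 1"
  shows "t_metric (ball 0 1) (complex_of_real \<alpha> * v) (complex_of_real \<beta> * v)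
           = \<bar>\<alpha> - \<beta>\<bar> / (\<bar>\<alpha> - \<beta>\<bar> + (1-\<alpha>) + (1-\<beta>))"
    and "jstar_metric (ball 0 1) (complex_of_real \<alpha> * v) (complex_of_real \<beta> * v)
           = \<bar>\<alpha> - \<beta>\<bar> / (\<bar>\<alpha> - \<beta>\<bar> + 2 * min (1-\<alpha>) (1-\<beta>))"
    and "s_metric (ball 0 1) (complex_of_real \<alpha> * v) (complex_of_real \<beta> * v)
           = \<bar>\<alpha> - \<beta>\<bar> / ((1-\<alpha>) + (1-\<beta>))"
    and "w_metric (ball 0 1) (complex_of_real \<alpha> * v) (complex_of_real \<beta> * v)
           = \<bar>\<alpha> - \<beta>\<bar> / ((1-\<alpha>) + (1-\<beta>))"
    and "p_metric (ball 0 1) (complex_of_real \<alpha> * v) (complex_of_real \<beta> * v)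
           = \<bar>\<alpha> - \<beta>\<bar> / sqrt (\<bar>\<alpha> - \<beta>\<bar>\<^sup>2 + 4 * (1-\<alpha>) * (1-\<beta>))"
    and "b2_metric (ball 0 1) (complex_of_real \<alpha> * v) (complex_of_real \<beta> * v)
           = \<bar>\<alpha> - \<beta>\<bar> / sqrt ((1-\<alpha>)\<^sup>2 + (1-\<beta>)\<^sup>2)"
proof -
  note bd = bdist_ray[OF assms(1,2,5)] bdist_ray[OF assms(3,4,5)]
  note rd = ray_dist[OF assms(5)]
  show "t_metric (ball 0 1) (complex_of_real \<alpha> * v) (complex_of_real \<beta> * v)
           = \<bar>\<alpha> - \<beta>\<bar> / (\<bar>\<alpha> - \<beta>\<bar> + (1-\<alpha>) + (1-\<beta>))"
    unfolding t_metric_def bd rd ..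
  show "jstar_metric (ball 0 1) (complex_of_real \<alpha> * v) (complex_of_real \<beta> * v)
           = \<bar>\<alpha> - \<beta>\<bar> / (\<bar>\<alpha> - \<beta>\<bar> + 2 * min (1-\<alpha>) (1-\<beta>))"
    unfolding jstar_metric_def bd rd ..
  show "s_metric (ball 0 1) (complex_of_real \<alpha> * v) (complex_of_real \<beta> * v)
           = \<bar>\<alpha> - \<beta>\<bar> / ((1-\<alpha>) + (1-\<beta>))"
    unfolding s_metric_def rd sinf_ray[OF assms] by simp
  show "w_metric (ball 0 1) (complex_of_real \<alpha> * v) (complex_of_real \<beta> * v)
           = \<bar>\<alpha> - \<beta>\<bar> / ((1-\<alpha>) + (1-\<beta>))"
    unfolding w_metric_def rd winf_ray[OF assms] winf_ray[OF assms(3,4,1,2,5)] by simp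
  show "p_metric (ball 0 1) (complex_of_real \<alpha> * v) (complex_of_real \<beta> * v)
           = \<bar>\<alpha> - \<beta>\<bar> / sqrt (\<bar>\<alpha> - \<beta>\<bar>\<^sup>2 + 4 * (1-\<alpha>) * (1-\<beta>))"
    unfolding p_metric_def bd rd ..
  show "b2_metric (ball 0 1) (complex_of_real \<alpha> * v) (complex_of_real \<beta> * v)
           = \<bar>\<alpha> - \<beta>\<bar> / sqrt ((1-\<alpha>)\<^sup>2 + (1-\<beta>)\<^sup>2)"
    by (rule b2sup_ray[OF assms])
qed

lemma generic:
  fixes d :: "complex set \<Rightarrow> complex \<Rightarrow> complex \<Rightarrow> real"
    and N :: "real \<Rightarrow> real \<Rightarrow> real \<Rightarrow> real" and a :: complex
  assumes a: "a \<in> ball 0 1"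
    and form: "\<And>\<alpha> \<beta> v. 0 \<le> \<alpha> \<Longrightarrow> \<alpha> < 1 \<Longrightarrow> 0 \<le> \<beta> \<Longrightarrow> \<beta> < 1 \<Longrightarrow> norm v = 1 \<Longrightarrow>
       d (ball 0 1) (complex_of_real \<alpha> * v) (complex_of_real \<beta> * v)
         = \<bar>\<alpha> - \<beta>\<bar> / N \<bar>\<alpha> - \<beta>\<bar> (1-\<alpha>) (1-\<beta>)"
    and hom: "\<And>k x y z. k > 0 \<Longrightarrow> N (k*x) (k*y) (k*z) = k * N x y z"
    and lim: "\<And>c r. ((\<lambda>s. N (s*c) (1+r * s) (1-s)) \<longlongrightarrow> N 0 1 1) (at 0)"
    and pos: "N 0 1 1 \<noteq> 0"
  shows "ereal (1 + norm a) \<le>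
           Sup {ereal (d (ball 0 1) (moebT a x) (moebT a y) / d (ball 0 1) x y) | x y.
                  x \<in> ball 0 1 \<and> y \<in> ball 0 1 \<and> x \<noteq> y}" (is "_ \<le> Sup ?S")
proof -
  define r where "r = norm a"
  have r0: "0 \<le> r" and r1: "r < 1" using a by (auto simp: r_def)
  define v where "v = (if a = 0 then 1 else - a / complex_of_real (norm a))"
  have nv: "norm v = 1" by (simp add: v_def norm_divide)
  have av: "a = - complex_of_real r * v" by (simp add: v_def r_def)
  have cv: "cnj v * v = 1"
    using complex_norm_square[of v] nv by (simp add: mult.commute)
  have T: "moebT a (complex_of_real t * v) = complex_of_real ((t+r)/(1+r*t)) * v" if t0: "0 \<le> t" for t
  proof -
    have "cnj a * (complex_of_real t * v) = - complex_of_real (r*t) * (cnj v * v)"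
      by (simp add: av mult_ac)
    then have den: "1 - cnj a * (complex_of_real t * v) = complex_of_real (1 + r*t)"
      using cv by simp
    have nz: "1 + r*t \<noteq> 0" using r0 t0 by (smt (verit) mult_nonneg_nonneg)
    show ?thesis unfolding moebT_def den using nz
      by (simp add: av field_simps)
  qed
  define g where "g s = (1+r) * N s 1 (1-s) / N (s*(1+r)) (1+r * s) (1-s)" for s
  have bound: "ereal (g s) \<le> Sup ?S" if s0: "0 < s" and s1: "s < 1" for s
  proof -
    define b where "b = (s+r)/(1+r * s)"
    have rs: "0 < 1 + r * s" using r0 s0 by (smt (verit) mult_nonneg_nonneg)
    have b0: "0 \<le> b" using r0 s0 rs by (simp add: b_def)
    have b1: "b < 1"
    proof -
      have "0 < (1-r)*(1-s)" using r1 s1 by simp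
      then have "s + r < 1 + r * s" by (simp add: algebra_simps)
      then show ?thesis using rs by (simp add: b_def divide_less_eq)
    qed
    define k where "k = (1-r)/(1+r * s)"
    have k0: "0 < k" using r1 rs by (simp add: k_def)
    have e1: "\<bar>r - b\<bar> = k * (s*(1+r))"
    proof -
      have "b - r = k * (s*(1+r))" unfolding b_def k_def using rs
        by (simp add: field_simps)
      moreover have "0 \<le> k * (s*(1+r))" using k0 s0 r0 by simp
      ultimately show ?thesis by simp
    qed
    have e2: "1 - r = k * (1 + r * s)" unfolding k_def using rs by simp
    have e3: "1 - b = k * (1 - s)" unfolding b_def k_def using rs
      by (simp add: field_simps)
    have x0: "moebT a (complex_of_real 0 * v) = complex_of_real r * v" using T[of 0] by simp
    have y0: "moebT a (complex_of_real s * v) = complex_of_real b * v" using T[of s] s0 by (simp add: b_def)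
    have dxy: "d (ball 0 1) (complex_of_real 0 * v) (complex_of_real s * v) = s / N s 1 (1-s)"
      using form[of 0 s v] s0 s1 nv by simp
    have dT: "d (ball 0 1) (complex_of_real r * v) (complex_of_real b * v) = s*(1+r) / N (s*(1+r)) (1+r * s) (1-s)"
    proof -
      have "d (ball 0 1) (complex_of_real r * v) (complex_of_real b * v)
          = (k * (s*(1+r))) / (k * N (s*(1+r)) (1+r * s) (1-s))"
        using form[OF r0 r1 b0 b1 nv] e1 e2 e3 hom[OF k0] by simp
      also have "\<dots> = s*(1+r) / N (s*(1+r)) (1+r * s) (1-s)" using k0 by simp
      finally show ?thesis .
    qed
    have "g s = d (ball 0 1) (moebT a (complex_of_real 0 * v)) (moebT a (complex_of_real s * v))
               / d (ball 0 1) (complex_of_real 0 * v) (complex_of_real s * v)"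
      unfolding x0 y0 dT dxy g_def using s0
      by (cases "N s 1 (1-s) = 0"; cases "N (s*(1+r)) (1+r * s) (1-s) = 0") (simp_all add: field_simps)
    moreover have "complex_of_real 0 * v \<in> ball 0 1" "complex_of_real s * v \<in> ball 0 1"
      "complex_of_real 0 * v \<noteq> complex_of_real s * v"
      using nv s0 s1 by (auto simp: norm_mult)
    ultimately have "ereal (g s) \<in> ?S" by blast
    then show ?thesis by (rule Sup_upper)
  qed
  have l1: "((\<lambda>s. N s 1 (1-s)) \<longlongrightarrow> N 0 1 1) (at 0)" using lim[of 1 0] by simp
  have l2: "((\<lambda>s. N (s*(1+r)) (1+r * s) (1-s)) \<longlongrightarrow> N 0 1 1) (at 0)" using lim[of "1+r" r] by simp
  have "(g \<longlongrightarrow> (1+r) * N 0 1 1 / N 0 1 1) (at 0)"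
    unfolding g_def by (intro tendsto_intros l1 l2 pos)
  then have "(g \<longlongrightarrow> 1 + r) (at_right 0)" using pos
    by (simp add: tendsto_mono[OF at_le[OF subset_UNIV]])
  then have lg: "((\<lambda>s. ereal (g s)) \<longlongrightarrow> ereal (1 + r)) (at_right 0)"
    by (simp add: lim_ereal)
  have ev: "\<forall>\<^sub>F s in at_right 0. ereal (g s) \<le> Sup ?S"
  proof (rule eventually_at_rightI[of 0 1])
    fix s :: real assume "s \<in> {0<..<1}"
    then show "ereal (g s) \<le> Sup ?S" using bound by simp
  qed simp
  have "ereal (1 + r) \<le> Sup ?S"
    by (rule tendsto_le[OF trivial_limit_at_right_real tendsto_const lg ev])
  then show ?thesis by (simp add: r_def)
qed

theorem lemma4p9:
  fixes a :: complex
  assumes "a \<in> ball 0 1"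
  shows "\<forall>d \<in> {t_metric, jstar_metric, w_metric, s_metric, p_metric, b2_metric}.
           ereal (1 + norm a) \<le>
           Sup {ereal (d (ball 0 1) (moebT a x) (moebT a y) / d (ball 0 1) x y) | x y.
                  x \<in> ball 0 1 \<and> y \<in> ball 0 1 \<and> x \<noteq> y}"
proof (intro ballI)
  fix d :: "complex set \<Rightarrow> complex \<Rightarrow> complex \<Rightarrow> real"
  assume "d \<in> {t_metric, jstar_metric, w_metric, s_metric, p_metric, b2_metric}"
  then consider "d = t_metric" | "d = jstar_metric" | "d = w_metric" | "d = s_metric"
    | "d = p_metric" | "d = b2_metric" by blast
  then show "ereal (1 + norm a) \<le>
           Sup {ereal (d (ball 0 1) (moebT a x) (moebT a y) / d (ball 0 1) x y) | x y.
                  x \<in> ball 0 1 \<and> y \<in> ball 0 1 \<and> x \<noteq> y}"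
  proof cases
    case 1
    show ?thesis unfolding 1
      apply (rule generic[OF assms, where N="\<lambda>x y z. x + y + z"])
      subgoal by (simp add: forms)
      by (auto simp: algebra_simps intro!: tendsto_eq_intros)
  next
    case 2
    show ?thesis unfolding 2
      apply (rule generic[OF assms, where N="\<lambda>x y z. x + 2 * min y z"])
      subgoal by (simp add: forms)
      by (auto simp: algebra_simps min_mult_distrib_left intro!: tendsto_eq_intros)
  next
    case 3
    show ?thesis unfolding 3
      apply (rule generic[OF assms, where N="\<lambda>x y z. y + z"])
      subgoal by (simp add: forms)
      by (auto simp: algebra_simps intro!: tendsto_eq_intros)
  next
    case 4
    show ?thesis unfolding 4
      apply (rule generic[OF assms, where N="\<lambda>x y z. y + z"])
      subgoal by (simp add: forms)
      by (auto simp: algebra_simps intro!: tendsto_eq_intros)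
  next
    case 5
    have h: "sqrt ((k*x)\<^sup>2 + 4 * (k*y) * (k*z)) = k * sqrt (x\<^sup>2 + 4*y*z)" if "k > 0" for k x y z :: real
    proof -
      have "(k*x)\<^sup>2 + 4 * (k*y) * (k*z) = k\<^sup>2 * (x\<^sup>2 + 4*y*z)" by (simp add: algebra_simps power2_eq_square)
      then show ?thesis using that by (simp add: real_sqrt_mult)
    qed
    show ?thesis unfolding 5
      apply (rule generic[OF assms, where N="\<lambda>x y z. sqrt (x\<^sup>2 + 4*y*z)"])
      subgoal by (simp add: forms)
      by (auto simp: h intro!: tendsto_eq_intros)
  next
    case 6
    have h: "sqrt ((k*y)\<^sup>2 + (k*z)\<^sup>2) = k * sqrt (y\<^sup>2 + z\<^sup>2)" if "k > 0" for k y z :: real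
    proof -
      have "(k*y)\<^sup>2 + (k*z)\<^sup>2 = k\<^sup>2 * (y\<^sup>2 + z\<^sup>2)" by (simp add: algebra_simps power2_eq_square)
      then show ?thesis using that by (simp add: real_sqrt_mult)
    qed
    show ?thesis unfolding 6
      apply (rule generic[OF assms, where N="\<lambda>x y z. sqrt (y\<^sup>2 + z\<^sup>2)"])
      subgoal by (simp add: forms)
      by (auto simp: h intro!: tendsto_eq_intros)
  qed
qed

end
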